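(* Let $K$ be a field and let $C=(c_{i,j})_{1\le i,j\le n}$ be a frieze matrix over $K$. Then for all $1\le i\le n-1$, $$c_{i,n}c_{1,i+1}-c_{i+1,n}c_{1,i} = c_{i,i+1}c_{1,n}.$$
   Context: A frieze matrix is a symmetric $n\times n$ matrix $C=(c_{i,j})$ over $K$ such that $c_{i,j}=0$ if and only if $i=j$, and satisfying the generalized diamond rule $c_{i,j}c_{i+1,j+1}-c_{i+1,j}c_{i,j+1}=c_{i,i+1}c_{j,j+1}$ for all indices with $n-1\ge j\ge i+1\ge 2$. *)

theory Defs
  imports Main
begin

text \<open>An n x n matrix over a field, indexed by 1..n, represented as a function
  nat => nat => 'a (only entries with indices in 1..n are relevant).\<close>

definition frieze_matrix :: "nat \<Rightarrow> (nat \<Rightarrow> nat \<Rightarrow> 'a::field) \<Rightarrow> bool" where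
  "frieze_matrix n c \<longleftrightarrow>
     (\<forall>i\<in>{1..n}. \<forall>j\<in>{1..n}. c i j = c j i) \<and>
     (\<forall>i\<in>{1..n}. \<forall>j\<in>{1..n}. c i j = 0 \<longleftrightarrow> i = j) \<and>
     (\<forall>i j. 1 \<le> i \<and> i + 1 \<le> j \<and> j \<le> n - 1 \<longrightarrow>
        c i j * c (i+1) (j+1) - c (i+1) j * c i (j+1) = c i (i+1) * c j (j+1))"

end

theory Submission
  imports Defs
begin

lemma alg_step:
  fixes p A B C D F Z xa ya xb yb xa' ya' xb' yb' :: "'a::field"
  assumes p: "p \<noteq> 0" and A: "A \<noteq> 0"
    and eA: "p*A = xa'*yb' - ya'*xb'"
    and eB: "p*B = xa*yb' - ya*xb'"
    and eC: "p*C = xa'*yb - ya'*xb"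
    and eD: "p*D = xa'*ya - ya'*xa"
    and eF: "p*F = xb'*yb - yb'*xb"
    and dia: "A*Z - B*C = D*F"
  shows "p*Z = xa*yb - ya*xb"
proof -
  have "(p*A)*(p*Z) = p*p*(A*Z)" by (simp add: algebra_simps)
  also have "\<dots> = (p*B)*(p*C) + (p*D)*(p*F)"
    using dia by (simp add: algebra_simps eq_diff_eq)
  also have "\<dots> = (p*A)*(xa*yb - ya*xb)"
    unfolding eA eB eC eD eF by (simp add: algebra_simps)
  finally have "(p*A)*(p*Z) = (p*A)*(xa*yb - ya*xb)" .
  thus ?thesis using p A by simp
qed

lemma fm_E:
  fixes c :: "nat \<Rightarrow> nat \<Rightarrow> 'a::field"
  assumes fm: "frieze_matrix n c"
  shows "2 \<le> a \<Longrightarrow> a \<le> b \<Longrightarrow> b \<le> n \<Longrightarrow>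
         c 1 2 * c a b = c 1 a * c 2 b - c 2 a * c 1 b"
proof (induction b arbitrary: a rule: less_induct)
  case (less b)
  note outer = less.IH
  have zero: "\<And>k. k \<in> {1..n} \<Longrightarrow> c k k = 0" using fm unfolding frieze_matrix_def by blast
  have nz: "\<And>k l. k \<in> {1..n} \<Longrightarrow> l \<in> {1..n} \<Longrightarrow> k \<noteq> l \<Longrightarrow> c k l \<noteq> 0"
    using fm unfolding frieze_matrix_def by blast
  have dia: "\<And>i j. 1 \<le> i \<Longrightarrow> i + 1 \<le> j \<Longrightarrow> j \<le> n - 1 \<Longrightarrow>
        c i j * c (i+1) (j+1) - c (i+1) j * c i (j+1) = c i (i+1) * c j (j+1)"
    using fm unfolding frieze_matrix_def by blast
  have edge: "\<And>k. 2 \<le> k \<Longrightarrow> k + 1 \<le> n \<Longrightarrow>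
      c 1 2 * c k (k+1) = c 1 k * c 2 (k+1) - c 2 k * c 1 (k+1)"
  proof -
    fix k assume k: "2 \<le> k" "k + 1 \<le> n"
    have "c 1 k * c (1+1) (k+1) - c (1+1) k * c 1 (k+1) = c 1 (1+1) * c k (k+1)"
      by (rule dia) (use k in auto)
    thus "c 1 2 * c k (k+1) = c 1 k * c 2 (k+1) - c 2 k * c 1 (k+1)" by (simp add: numeral_2_eq_2)
  qed
  show ?case using less.prems
  proof (induction a rule: less_induct)
    case (less a)
    show ?case
    proof (cases "a = 2 \<or> a = b \<or> a + 1 = b")
      case True
      then show ?thesis
      proof (elim disjE)
        assume "a = 2" thus ?thesis using zero[of 2] less.prems by simp
      next
        assume "a = b" thus ?thesis using zero[of a] less.prems by (simp add: mult.commute)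
      next
        assume "a + 1 = b" thus ?thesis using edge[of a] less.prems by auto
      qed
    next
      case False
      with less.prems have h: "3 \<le> a" "a + 2 \<le> b" by auto
      obtain a' where a': "a = Suc a'" using h by (cases a) auto
      obtain b' where b': "b = Suc b'" using h by (cases b) auto
      have d: "c a' b' * c a b - c a b' * c a' b = c a' a * c b' b"
        using dia[of a' b'] h a' b' less.prems by simp
      have eA: "c 1 2 * c a' b' = c 1 a' * c 2 b' - c 2 a' * c 1 b'"
        using outer[of b' a'] h a' b' less.prems by simp
      have eB: "c 1 2 * c a b' = c 1 a * c 2 b' - c 2 a * c 1 b'"
        using outer[of b' a] h a' b' less.prems by simp
      have eC: "c 1 2 * c a' b = c 1 a' * c 2 b - c 2 a' * c 1 b"
        using less.IH[of a'] h a' b' less.prems by simp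
      have eD: "c 1 2 * c a' a = c 1 a' * c 2 a - c 2 a' * c 1 a"
        using outer[of a a'] h a' b' less.prems by simp
      have eF: "c 1 2 * c b' b = c 1 b' * c 2 b - c 2 b' * c 1 b"
        using edge[of b'] h a' b' less.prems by simp
      have p: "c 1 2 \<noteq> 0" using nz[of 1 2] h less.prems by simp
      have A: "c a' b' \<noteq> 0" using nz[of a' b'] h a' b' less.prems by simp
      show ?thesis by (rule alg_step[OF p A eA eB eC eD eF d])
    qed
  qed
qed

theorem proposition4p5:
  fixes c :: "nat \<Rightarrow> nat \<Rightarrow> 'a::field" and n i :: nat
  assumes "frieze_matrix n c"
    and "1 \<le> i" and "i \<le> n - 1"
  shows "c i n * c 1 (i+1) - c (i+1) n * c 1 i = c i (i+1) * c 1 n"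
proof (cases "i = 1")
  case True
  have "c 1 1 = 0" using assms unfolding frieze_matrix_def by auto
  thus ?thesis using True by (simp add: mult.commute)
next
  case False
  have p: "c 1 2 \<noteq> 0" using assms False unfolding frieze_matrix_def by auto
  have e1: "c 1 2 * c i n = c 1 i * c 2 n - c 2 i * c 1 n"
    using fm_E[OF assms(1), of i n] assms False by simp
  have e2: "c 1 2 * c (i+1) n = c 1 (i+1) * c 2 n - c 2 (i+1) * c 1 n"
    using fm_E[OF assms(1), of "i+1" n] assms False by simp
  have e3: "c 1 2 * c i (i+1) = c 1 i * c 2 (i+1) - c 2 i * c 1 (i+1)"
    using fm_E[OF assms(1), of i "i+1"] assms False by simp
  have "c 1 2 * (c i n * c 1 (i+1) - c (i+1) n * c 1 i)
      = (c 1 2 * c i n) * c 1 (i+1) - (c 1 2 * c (i+1) n) * c 1 i"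
    by (simp add: algebra_simps)
  also have "\<dots> = (c 1 2 * c i (i+1)) * c 1 n"
    unfolding e1 e2 e3 by (simp add: algebra_simps)
  also have "\<dots> = c 1 2 * (c i (i+1) * c 1 n)" by (simp add: algebra_simps)
  finally show ?thesis using p by simp
qed

end
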